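(* Let $\Lambda\subset\mathbb{Z}^2$ be finite, $K\ge 1$, and $\Sigma_K=(\{0,1\}^K)^\Lambda$. For $\alpha>0$ and $\underline Y\in\Sigma_K$ define, for $\underline X\in\Sigma_K$, $$L_\alpha(\underline X\mid \underline Y)=\alpha\sum_{i\in\Lambda}\sum_{k=1}^K \mathbf 1_{\{X_i^k=Y_i^k\}}-\sum_{k=1}^K 2^{-k}\sum_{\langle i,j\rangle}\mathbf 1_{\{X_i^k\neq X_j^k\}},$$ where $\sum_{\langle i,j\rangle}$ runs over unordered pairs $\{i,j\}\subset\Lambda$ with $|i-j|=1$. Let $F_\alpha(\underline Y)$ denote a maximizer of $L_\alpha(\cdot\mid\underline Y)$ over $\Sigma_K$ (the MAP estimator with parameter $\alpha$). Then for all $0<s\le t$ and all $\underline Y\in\Sigma_K$: if $\hat{\underline X}$ is a maximizer of $L_s(\cdot\mid \underline Y)$, then $\hat{\underline X}$ is also a maximizer of $L_t(\cdot\mid\hat{\underline X})$. In particular, whenever the maximizers are unique, $F_s(\underline Y)=F_t(F_s(\underline Y))$ for all $t\ge s$.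
   Context: Setting: an image is $\underline X=(X_i)_{i\in\Lambda}$ with $X_i=(X_i^1,\dots,X_i^K)\in\{0,1\}^K$ (binary decomposition of the color intensity). The observed image $\underline Y$ arises from $\underline X$ by flipping each bit independently with probability $\epsilon\in(0,1/2)$, so $P(\underline Y\mid\underline X)\propto\exp\{h\sum_{i}\sum_k\mathbf 1_{\{X_i^k=Y_i^k\}}\}$ with $h=\log((1-\epsilon)/\epsilon)$; the a priori measure is $\mu(\underline X)\propto e^{-\beta H(\underline X)}$ with $\beta>0$ and $H(\underline X)=\sum_{k=1}^K\sum_{\langle i,j\rangle}2^{-k}\mathbf 1_{\{X_i^k\ne X_j^k\}}$. The MAP estimator (maximizer of the posterior $P(\underline X\mid\underline Y)\propto P(\underline Y\mid\underline X)\mu(\underline X)$) is exactly a maximizer of $L_\alpha(\cdot\mid\underline Y)$ with $\alpha=h/\beta$. *)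

theory Defs
  imports Complex_Main
begin

type_synonym site = "int \<times> int"
(* a configuration X: X i k is the k-th bit X_i^k at site i *)
type_synonym config = "site \<Rightarrow> nat \<Rightarrow> bool"

text \<open>Sigma_K: configurations on Lambda with K bits per site (values outside
  Lambda x {1..K} fixed to False, so that each element of ({0,1}^K)^Lambda
  has exactly one representative).\<close>
definition SigmaK :: "site set \<Rightarrow> nat \<Rightarrow> config set" where
  "SigmaK \<Lambda> K = {X. \<forall>i k. (i \<notin> \<Lambda> \<or> k \<notin> {1..K}) \<longrightarrow> \<not> X i k}"

definition nn_edges :: "site set \<Rightarrow> site set set" where
  "nn_edges \<Lambda> = {{i, j} | i j. i \<in> \<Lambda> \<and> j \<in> \<Lambda> \<and>
      (fst i - fst j)^2 + (snd i - snd j)^2 = 1}"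

definition disagree :: "config \<Rightarrow> nat \<Rightarrow> site set \<Rightarrow> bool" where
  "disagree X k e \<longleftrightarrow> (\<exists>i\<in>e. \<exists>j\<in>e. X i k \<noteq> X j k)"

definition L :: "site set \<Rightarrow> nat \<Rightarrow> real \<Rightarrow> config \<Rightarrow> config \<Rightarrow> real" where
  "L \<Lambda> K \<alpha> X Y =
     \<alpha> * (\<Sum>i\<in>\<Lambda>. \<Sum>k=1..K. (if X i k = Y i k then 1 else 0))
     - (\<Sum>k=1..K. (1/2)^k * (\<Sum>e\<in>nn_edges \<Lambda>. (if disagree X k e then 1 else 0)))"

definition is_MAP :: "site set \<Rightarrow> nat \<Rightarrow> real \<Rightarrow> config \<Rightarrow> config \<Rightarrow> bool" where
  "is_MAP \<Lambda> K \<alpha> Y X \<longleftrightarrow> X \<in> SigmaK \<Lambda> K \<and>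
     (\<forall>Z\<in>SigmaK \<Lambda> K. L \<Lambda> K \<alpha> Z Y \<le> L \<Lambda> K \<alpha> X Y)"

text \<open>F_alpha(Y): the (unique, when it exists) maximizer.\<close>
definition F :: "site set \<Rightarrow> nat \<Rightarrow> real \<Rightarrow> config \<Rightarrow> config" where
  "F \<Lambda> K \<alpha> Y = (THE X. is_MAP \<Lambda> K \<alpha> Y X)"

end

theory Submission
  imports Defs
begin

definition agr :: "site set \<Rightarrow> nat \<Rightarrow> config \<Rightarrow> config \<Rightarrow> real" where
  "agr \<Lambda> K X Y = (\<Sum>i\<in>\<Lambda>. \<Sum>k=1..K. (if X i k = Y i k then 1 else 0))"

definition reg :: "site set \<Rightarrow> nat \<Rightarrow> config \<Rightarrow> real" where
  "reg \<Lambda> K X = (\<Sum>k=1..K. (1/2)^k * (\<Sum>e\<in>nn_edges \<Lambda>. (if disagree X k e then 1 else 0)))"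

lemma L_eq: "L \<Lambda> K a X Y = a * agr \<Lambda> K X Y - reg \<Lambda> K X"
  unfolding L_def agr_def reg_def by simp

lemma agr_tri: "agr \<Lambda> K Xh Y + agr \<Lambda> K Z Xh \<le> agr \<Lambda> K Xh Xh + agr \<Lambda> K Z Y"
proof -
  have "agr \<Lambda> K Xh Y + agr \<Lambda> K Z Xh =
     (\<Sum>i\<in>\<Lambda>. \<Sum>k=1..K. (if Xh i k = Y i k then 1 else 0) + (if Z i k = Xh i k then 1 else 0))"
    unfolding agr_def by (simp add: sum.distrib)
  also have "\<dots> \<le> (\<Sum>i\<in>\<Lambda>. \<Sum>k=1..K. (if Xh i k = Xh i k then 1 else 0) + (if Z i k = Y i k then 1 else 0))"
    by (intro sum_mono) auto
  also have "\<dots> = agr \<Lambda> K Xh Xh + agr \<Lambda> K Z Y"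
    unfolding agr_def by (simp add: sum.distrib)
  finally show ?thesis .
qed

lemma agr_le: "agr \<Lambda> K Z Xh \<le> agr \<Lambda> K Xh Xh"
  unfolding agr_def by (intro sum_mono) auto

lemma part1:
  assumes "0 < s" "s \<le> t" "is_MAP \<Lambda> K s Y Xh"
  shows "is_MAP \<Lambda> K t Xh Xh"
proof -
  have XS: "Xh \<in> SigmaK \<Lambda> K" using assms(3) unfolding is_MAP_def by blast
  {
    fix Z assume Z: "Z \<in> SigmaK \<Lambda> K"
    have opt: "s * agr \<Lambda> K Z Y - reg \<Lambda> K Z \<le> s * agr \<Lambda> K Xh Y - reg \<Lambda> K Xh"
      using assms(3) Z unfolding is_MAP_def L_eq by blast
    define d where "d = agr \<Lambda> K Xh Xh - agr \<Lambda> K Z Xh"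
    have d0: "0 \<le> d" using agr_le[of \<Lambda> K Z Xh] unfolding d_def by simp
    have tri: "agr \<Lambda> K Xh Y - agr \<Lambda> K Z Y \<le> d" using agr_tri[of \<Lambda> K Xh Y Z] unfolding d_def by simp
    have "s * (agr \<Lambda> K Xh Y - agr \<Lambda> K Z Y) \<le> s * d"
      using tri assms(1) by (simp add: mult_left_mono)
    also have "\<dots> \<le> t * d" using d0 assms(2) by (simp add: mult_right_mono)
    finally have "s * (agr \<Lambda> K Xh Y - agr \<Lambda> K Z Y) \<le> t * d" .
    hence "L \<Lambda> K t Z Xh \<le> L \<Lambda> K t Xh Xh"
      using opt unfolding L_eq d_def by (simp add: algebra_simps)
  }
  thus ?thesis using XS unfolding is_MAP_def by blast
qed

theorem mainTheorem1:
  fixes \<Lambda> :: "site set" and K :: nat and s t :: real and Y :: config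
  assumes "finite \<Lambda>" and "K \<ge> 1" and "0 < s" and "s \<le> t" and "Y \<in> SigmaK \<Lambda> K"
  shows "(\<forall>Xh. is_MAP \<Lambda> K s Y Xh \<longrightarrow> is_MAP \<Lambda> K t Xh Xh)
     \<and> (((\<exists>!X. is_MAP \<Lambda> K s Y X) \<and> (\<exists>!X. is_MAP \<Lambda> K t (F \<Lambda> K s Y) X))
          \<longrightarrow> F \<Lambda> K s Y = F \<Lambda> K t (F \<Lambda> K s Y))"
proof (intro conjI allI impI)
  fix Xh assume "is_MAP \<Lambda> K s Y Xh"
  thus "is_MAP \<Lambda> K t Xh Xh" using part1 assms(3,4) by blast
next
  assume H: "(\<exists>!X. is_MAP \<Lambda> K s Y X) \<and> (\<exists>!X. is_MAP \<Lambda> K t (F \<Lambda> K s Y) X)"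
  have M: "is_MAP \<Lambda> K s Y (F \<Lambda> K s Y)"
    unfolding F_def using H theI' by metis
  have M2: "is_MAP \<Lambda> K t (F \<Lambda> K s Y) (F \<Lambda> K s Y)" using part1[OF assms(3,4) M] .
  show "F \<Lambda> K s Y = F \<Lambda> K t (F \<Lambda> K s Y)"
    unfolding F_def[of \<Lambda> K t] using H M2 the1_equality by metis
qed

end
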